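(* Let $\{Y_x\}_{x\in\mathcal{X}}$ be a Gaussian process with prior mean $\mu_x$ and prior covariance $\sigma_{xx'}$. Let $\mathcal{D}\subset\mathcal{X}$ be a finite set of inputs with observed outputs $y_{\mathcal{D}}$, partitioned into pairwise disjoint sets $\mathcal{D}_1,\ldots,\mathcal{D}_M$ with $|\mathcal{D}_m|=|\mathcal{D}|/M$, and let $\mathcal{U}\subseteq\mathcal{X}\setminus\mathcal{D}$ be a finite set of test inputs partitioned into pairwise disjoint sets $\mathcal{U}_1,\ldots,\mathcal{U}_M$ with $|\mathcal{U}_m|=|\mathcal{U}|/M$. Let $\mathcal{S}\subset\mathcal{X}$ be a finite support set (common to all $M$ machines), and assume all matrix inverses below exist. For $\mathcal{B},\mathcal{B}'\subset\mathcal{X}$ and $m=1,\ldots,M$ define the local summary quantities $\dot{y}^m_{\mathcal{B}}\triangleq \Sigma_{\mathcal{B}\mathcal{D}_m}\Sigma^{-1}_{\mathcal{D}_m\mathcal{D}_m|\mathcal{S}}(y_{\mathcal{D}_m}-\mu_{\mathcal{D}_m})$ and $\dot{\Sigma}^m_{\mathcal{B}\mathcal{B}'}\triangleq \Sigma_{\mathcal{B}\mathcal{D}_m}\Sigma^{-1}_{\mathcal{D}_m\mathcal{D}_m|\mathcal{S}}\Sigma_{\mathcal{D}_m\mathcal{B}'}$, the global summary $\ddot{y}_{\mathcal{S}}\triangleq\sum_{m=1}^M\dot{y}^m_{\mathcal{S}}$ and $\ddot{\Sigma}_{\mathcal{S}\mathcal{S}}\triangleq\Sigma_{\mathcal{S}\mathcal{S}}+\sum_{m=1}^M\dot{\Sigma}^m_{\mathcal{S}\mathcal{S}}$,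 and $\Phi^m_{\mathcal{U}_m\mathcal{S}}\triangleq \Sigma_{\mathcal{U}_m\mathcal{S}}+\Sigma_{\mathcal{U}_m\mathcal{S}}\Sigma^{-1}_{\mathcal{S}\mathcal{S}}\dot{\Sigma}^m_{\mathcal{S}\mathcal{S}}-\dot{\Sigma}^m_{\mathcal{U}_m\mathcal{S}}$, with $\Phi^m_{\mathcal{S}\mathcal{U}_m}$ its transpose. Define the pPIC predictive mean and covariance blockwise by $$\widehat{\mu}^+_{\mathcal{U}_m}\triangleq\mu_{\mathcal{U}_m}+\left(\Phi^m_{\mathcal{U}_m\mathcal{S}}\ddot{\Sigma}^{-1}_{\mathcal{S}\mathcal{S}}\ddot{y}_{\mathcal{S}}-\Sigma_{\mathcal{U}_m\mathcal{S}}\Sigma^{-1}_{\mathcal{S}\mathcal{S}}\dot{y}^m_{\mathcal{S}}\right)+\dot{y}^m_{\mathcal{U}_m},$$ $$\widehat{\Sigma}^+_{\mathcal{U}_m\mathcal{U}_m}\triangleq\Sigma_{\mathcal{U}_m\mathcal{U}_m}-\left(\Phi^m_{\mathcal{U}_m\mathcal{S}}\Sigma^{-1}_{\mathcal{S}\mathcal{S}}\Sigma_{\mathcal{S}\mathcal{U}_m}-\Sigma_{\mathcal{U}_m\mathcal{S}}\Sigma^{-1}_{\mathcal{S}\mathcal{S}}\dot{\Sigma}^m_{\mathcal{S}\mathcal{U}_m}-\Phi^m_{\mathcal{U}_m\mathcal{S}}\ddot{\Sigma}^{-1}_{\mathcal{S}\mathcal{S}}\Phi^m_{\mathcal{S}\mathcal{U}_m}\right)-\dot{\Sigma}^m_{\mathcal{U}_m\mathcal{U}_m},$$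 and for $i\neq j$, $\widehat{\Sigma}^+_{\mathcal{U}_i\mathcal{U}_j}\triangleq\Sigma_{\mathcal{U}_i\mathcal{U}_j|\mathcal{S}}+\Phi^i_{\mathcal{U}_i\mathcal{S}}\ddot{\Sigma}^{-1}_{\mathcal{S}\mathcal{S}}\Phi^j_{\mathcal{S}\mathcal{U}_j}$; let $\widehat{\mu}^+_{\mathcal{U}}$ and $\widehat{\Sigma}^+_{\mathcal{U}\mathcal{U}}$ be the vector and matrix assembled from these blocks. Let the centralized PIC predictive distribution be $\mathcal{N}(\mu^{\mathrm{PIC}}_{\mathcal{U}|\mathcal{D}},\Sigma^{\mathrm{PIC}}_{\mathcal{U}\mathcal{U}|\mathcal{D}})$ with $$\mu^{\mathrm{PIC}}_{\mathcal{U}|\mathcal{D}}\triangleq\mu_{\mathcal{U}}+\widetilde{\Gamma}_{\mathcal{U}\mathcal{D}}(\Gamma_{\mathcal{D}\mathcal{D}}+\Lambda)^{-1}(y_{\mathcal{D}}-\mu_{\mathcal{D}}),\qquad \Sigma^{\mathrm{PIC}}_{\mathcal{U}\mathcal{U}|\mathcal{D}}\triangleq\Sigma_{\mathcal{U}\mathcal{U}}-\widetilde{\Gamma}_{\mathcal{U}\mathcal{D}}(\Gamma_{\mathcal{D}\mathcal{D}}+\Lambda)^{-1}\widetilde{\Gamma}_{\mathcal{D}\mathcal{U}},$$ where $\Gamma_{\mathcal{B}\mathcal{B}'}\triangleq\Sigma_{\mathcal{B}\mathcal{S}}\Sigma^{-1}_{\mathcal{S}\mathcal{S}}\Sigma_{\mathcal{S}\mathcal{B}'}$,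 $\Lambda$ is the block-diagonal matrix whose diagonal blocks are $\Sigma_{\mathcal{D}_m\mathcal{D}_m|\mathcal{S}}$ for $m=1,\ldots,M$, $\widetilde{\Gamma}_{\mathcal{U}\mathcal{D}}$ is the block matrix $(\widetilde{\Gamma}_{\mathcal{U}_i\mathcal{D}_m})_{i,m=1,\ldots,M}$ with $\widetilde{\Gamma}_{\mathcal{U}_i\mathcal{D}_m}=\Sigma_{\mathcal{U}_i\mathcal{D}_m}$ if $i=m$ and $\widetilde{\Gamma}_{\mathcal{U}_i\mathcal{D}_m}=\Gamma_{\mathcal{U}_i\mathcal{D}_m}$ otherwise, and $\widetilde{\Gamma}_{\mathcal{D}\mathcal{U}}$ is its transpose. Then $\widehat{\mu}^+_{\mathcal{U}}=\mu^{\mathrm{PIC}}_{\mathcal{U}|\mathcal{D}}$ and $\widehat{\Sigma}^+_{\mathcal{U}\mathcal{U}}=\Sigma^{\mathrm{PIC}}_{\mathcal{U}\mathcal{U}|\mathcal{D}}$.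
   Context: For finite sets $\mathcal{A},\mathcal{B}\subset\mathcal{X}$, $\mu_{\mathcal{A}}$ denotes the column vector of prior means $\mu_x$, $x\in\mathcal{A}$, and $\Sigma_{\mathcal{A}\mathcal{B}}$ the matrix of prior covariances $\sigma_{xx'}$, $x\in\mathcal{A}$, $x'\in\mathcal{B}$; $\Sigma_{\mathcal{B}\mathcal{A}}$ is the transpose of $\Sigma_{\mathcal{A}\mathcal{B}}$. The posterior covariance given $\mathcal{S}$ is $\Sigma_{\mathcal{A}\mathcal{B}|\mathcal{S}}\triangleq\Sigma_{\mathcal{A}\mathcal{B}}-\Sigma_{\mathcal{A}\mathcal{S}}\Sigma^{-1}_{\mathcal{S}\mathcal{S}}\Sigma_{\mathcal{S}\mathcal{B}}$. The vectors/matrices indexed by $\mathcal{D}$ and $\mathcal{U}$ are ordered consistently with the partitions $\mathcal{D}_1,\ldots,\mathcal{D}_M$ and $\mathcal{U}_1,\ldots,\mathcal{U}_M$. *)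

theory Defs
  imports Complex_Main
begin

text \<open>Matrices indexed by finite subsets of the input domain 'x are represented as
  functions 'x \<Rightarrow> 'x \<Rightarrow> real (only entries on the relevant index sets matter);
  vectors as functions 'x \<Rightarrow> real.\<close>

definition is_inv_on :: "'x set \<Rightarrow> ('x \<Rightarrow> 'x \<Rightarrow> real) \<Rightarrow> ('x \<Rightarrow> 'x \<Rightarrow> real) \<Rightarrow> bool" where
  "is_inv_on A P Q \<longleftrightarrow>
     (\<forall>i\<in>A. \<forall>j\<in>A. (\<Sum>k\<in>A. P i k * Q k j) = (if i = j then 1 else 0)
                 \<and> (\<Sum>k\<in>A. Q i k * P k j) = (if i = j then 1 else 0))"

definition invertible_on :: "'x set \<Rightarrow> ('x \<Rightarrow> 'x \<Rightarrow> real) \<Rightarrow> bool" where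
  "invertible_on A P \<longleftrightarrow> (\<exists>Q. is_inv_on A P Q)"

definition minv :: "'x set \<Rightarrow> ('x \<Rightarrow> 'x \<Rightarrow> real) \<Rightarrow> ('x \<Rightarrow> 'x \<Rightarrow> real)" where
  "minv A P = (let Q = (SOME Q. is_inv_on A P Q) in (\<lambda>i j. if i \<in> A \<and> j \<in> A then Q i j else 0))"

definition tri :: "'x set \<Rightarrow> 'x set \<Rightarrow> ('x \<Rightarrow> 'x \<Rightarrow> real) \<Rightarrow> ('x \<Rightarrow> 'x \<Rightarrow> real)
                     \<Rightarrow> ('x \<Rightarrow> 'x \<Rightarrow> real) \<Rightarrow> 'x \<Rightarrow> 'x \<Rightarrow> real" where
  "tri A B P Q R i j = (\<Sum>k\<in>A. \<Sum>l\<in>B. P i k * Q k l * R l j)"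

definition triv :: "'x set \<Rightarrow> 'x set \<Rightarrow> ('x \<Rightarrow> 'x \<Rightarrow> real) \<Rightarrow> ('x \<Rightarrow> 'x \<Rightarrow> real)
                     \<Rightarrow> ('x \<Rightarrow> real) \<Rightarrow> 'x \<Rightarrow> real" where
  "triv A B P Q v i = (\<Sum>k\<in>A. \<Sum>l\<in>B. P i k * Q k l * v l)"

definition Gam :: "('x \<Rightarrow> 'x \<Rightarrow> real) \<Rightarrow> 'x set \<Rightarrow> 'x \<Rightarrow> 'x \<Rightarrow> real" where
  "Gam \<sigma> S = tri S S \<sigma> (minv S \<sigma>) \<sigma>"

definition condcov :: "('x \<Rightarrow> 'x \<Rightarrow> real) \<Rightarrow> 'x set \<Rightarrow> 'x \<Rightarrow> 'x \<Rightarrow> real" where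
  "condcov \<sigma> S = (\<lambda>i j. \<sigma> i j - Gam \<sigma> S i j)"

definition ydot :: "('x \<Rightarrow> real) \<Rightarrow> ('x \<Rightarrow> 'x \<Rightarrow> real) \<Rightarrow> ('x \<Rightarrow> real) \<Rightarrow> 'x set \<Rightarrow> 'x set \<Rightarrow> 'x \<Rightarrow> real" where
  "ydot \<mu> \<sigma> y S Dm = triv Dm Dm \<sigma> (minv Dm (condcov \<sigma> S)) (\<lambda>l. y l - \<mu> l)"

definition Sdot :: "('x \<Rightarrow> 'x \<Rightarrow> real) \<Rightarrow> 'x set \<Rightarrow> 'x set \<Rightarrow> 'x \<Rightarrow> 'x \<Rightarrow> real" where
  "Sdot \<sigma> S Dm = tri Dm Dm \<sigma> (minv Dm (condcov \<sigma> S)) \<sigma>"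

definition yddot :: "('x \<Rightarrow> real) \<Rightarrow> ('x \<Rightarrow> 'x \<Rightarrow> real) \<Rightarrow> ('x \<Rightarrow> real) \<Rightarrow> 'x set
                      \<Rightarrow> nat \<Rightarrow> (nat \<Rightarrow> 'x set) \<Rightarrow> 'x \<Rightarrow> real" where
  "yddot \<mu> \<sigma> y S M D = (\<lambda>i. \<Sum>m\<in>{1..M}. ydot \<mu> \<sigma> y S (D m) i)"

definition Sddot :: "('x \<Rightarrow> 'x \<Rightarrow> real) \<Rightarrow> 'x set \<Rightarrow> nat \<Rightarrow> (nat \<Rightarrow> 'x set) \<Rightarrow> 'x \<Rightarrow> 'x \<Rightarrow> real" where
  "Sddot \<sigma> S M D = (\<lambda>i j. \<sigma> i j + (\<Sum>m\<in>{1..M}. Sdot \<sigma> S (D m) i j))"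

text \<open>Phi^m_{U_m S}; entry (u,s).  Its transpose Phi^m_{S U_m} has entry (s,u) = Phi u s.\<close>
definition Phi :: "('x \<Rightarrow> 'x \<Rightarrow> real) \<Rightarrow> 'x set \<Rightarrow> 'x set \<Rightarrow> 'x \<Rightarrow> 'x \<Rightarrow> real" where
  "Phi \<sigma> S Dm = (\<lambda>u s. \<sigma> u s + tri S S \<sigma> (minv S \<sigma>) (Sdot \<sigma> S Dm) u s - Sdot \<sigma> S Dm u s)"

text \<open>pPIC predictive mean at u, where u belongs to the test block of machine m.\<close>
definition mu_pPIC :: "('x \<Rightarrow> real) \<Rightarrow> ('x \<Rightarrow> 'x \<Rightarrow> real) \<Rightarrow> ('x \<Rightarrow> real) \<Rightarrow> 'x set
                        \<Rightarrow> nat \<Rightarrow> (nat \<Rightarrow> 'x set) \<Rightarrow> nat \<Rightarrow> 'x \<Rightarrow> real" where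
  "mu_pPIC \<mu> \<sigma> y S M D m u =
     \<mu> u + (triv S S (Phi \<sigma> S (D m)) (minv S (Sddot \<sigma> S M D)) (yddot \<mu> \<sigma> y S M D) u
             - triv S S \<sigma> (minv S \<sigma>) (ydot \<mu> \<sigma> y S (D m)) u)
         + ydot \<mu> \<sigma> y S (D m) u"

text \<open>pPIC predictive covariance at (u,v), u in test block i, v in test block j.\<close>
definition Sigma_pPIC :: "('x \<Rightarrow> 'x \<Rightarrow> real) \<Rightarrow> 'x set \<Rightarrow> nat \<Rightarrow> (nat \<Rightarrow> 'x set)
                           \<Rightarrow> nat \<Rightarrow> nat \<Rightarrow> 'x \<Rightarrow> 'x \<Rightarrow> real" where
  "Sigma_pPIC \<sigma> S M D i j u v =
     (if i = j then
        \<sigma> u v - (tri S S (Phi \<sigma> S (D i)) (minv S \<sigma>) \<sigma> u v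
                 - tri S S \<sigma> (minv S \<sigma>) (Sdot \<sigma> S (D i)) u v
                 - tri S S (Phi \<sigma> S (D i)) (minv S (Sddot \<sigma> S M D)) (\<lambda>s w. Phi \<sigma> S (D i) w s) u v)
              - Sdot \<sigma> S (D i) u v
      else
        condcov \<sigma> S u v
          + tri S S (Phi \<sigma> S (D i)) (minv S (Sddot \<sigma> S M D)) (\<lambda>s w. Phi \<sigma> S (D j) w s) u v)"

definition Lam :: "('x \<Rightarrow> 'x \<Rightarrow> real) \<Rightarrow> 'x set \<Rightarrow> nat \<Rightarrow> (nat \<Rightarrow> 'x set) \<Rightarrow> 'x \<Rightarrow> 'x \<Rightarrow> real" where
  "Lam \<sigma> S M D = (\<lambda>i j. if \<exists>m\<in>{1..M}. i \<in> D m \<and> j \<in> D m then condcov \<sigma> S i j else 0)"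

definition GamT :: "('x \<Rightarrow> 'x \<Rightarrow> real) \<Rightarrow> 'x set \<Rightarrow> nat \<Rightarrow> (nat \<Rightarrow> 'x set) \<Rightarrow> (nat \<Rightarrow> 'x set)
                     \<Rightarrow> 'x \<Rightarrow> 'x \<Rightarrow> real" where
  "GamT \<sigma> S M D U = (\<lambda>u d. if \<exists>m\<in>{1..M}. u \<in> U m \<and> d \<in> D m then \<sigma> u d else Gam \<sigma> S u d)"

definition PICK :: "('x \<Rightarrow> 'x \<Rightarrow> real) \<Rightarrow> 'x set \<Rightarrow> nat \<Rightarrow> (nat \<Rightarrow> 'x set) \<Rightarrow> 'x \<Rightarrow> 'x \<Rightarrow> real" where
  "PICK \<sigma> S M D = (\<lambda>i j. Gam \<sigma> S i j + Lam \<sigma> S M D i j)"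

definition mu_PIC :: "('x \<Rightarrow> real) \<Rightarrow> ('x \<Rightarrow> 'x \<Rightarrow> real) \<Rightarrow> ('x \<Rightarrow> real) \<Rightarrow> 'x set \<Rightarrow> nat
                       \<Rightarrow> (nat \<Rightarrow> 'x set) \<Rightarrow> (nat \<Rightarrow> 'x set) \<Rightarrow> 'x \<Rightarrow> real" where
  "mu_PIC \<mu> \<sigma> y S M D U u =
     \<mu> u + triv (\<Union>m\<in>{1..M}. D m) (\<Union>m\<in>{1..M}. D m) (GamT \<sigma> S M D U)
              (minv (\<Union>m\<in>{1..M}. D m) (PICK \<sigma> S M D)) (\<lambda>l. y l - \<mu> l) u"

definition Sigma_PIC :: "('x \<Rightarrow> 'x \<Rightarrow> real) \<Rightarrow> 'x set \<Rightarrow> nat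
                       \<Rightarrow> (nat \<Rightarrow> 'x set) \<Rightarrow> (nat \<Rightarrow> 'x set) \<Rightarrow> 'x \<Rightarrow> 'x \<Rightarrow> real" where
  "Sigma_PIC \<sigma> S M D U u v =
     \<sigma> u v - tri (\<Union>m\<in>{1..M}. D m) (\<Union>m\<in>{1..M}. D m) (GamT \<sigma> S M D U)
              (minv (\<Union>m\<in>{1..M}. D m) (PICK \<sigma> S M D)) (\<lambda>d w. GamT \<sigma> S M D U w d) u v"

end

theory Submission
  imports Defs
begin


definition vm :: "'x set \<Rightarrow> ('x \<Rightarrow> real) \<Rightarrow> ('x \<Rightarrow> 'x \<Rightarrow> real) \<Rightarrow> 'x \<Rightarrow> real" where
  "vm A w P = (\<lambda>j. \<Sum>k\<in>A. w k * P k j)"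
definition dot :: "'x set \<Rightarrow> ('x \<Rightarrow> real) \<Rightarrow> ('x \<Rightarrow> real) \<Rightarrow> real" where
  "dot A w r = (\<Sum>k\<in>A. w k * r k)"

lemma vm_vm: "vm B (vm A w P) Q = vm A w (\<lambda>k. vm B (P k) Q)"
  unfolding vm_def
  by (auto simp: sum_distrib_left sum_distrib_right mult.assoc intro!: ext sum.swap)

lemma dot_vm: "dot B (vm A w P) r = dot A w (\<lambda>k. dot B (P k) r)"
  unfolding vm_def dot_def
  by (auto simp: sum_distrib_left sum_distrib_right mult.assoc intro!: sum.swap)

lemma dot_comm: "dot A w r = dot A r w"
  unfolding dot_def by (simp add: mult.commute)

lemma vm_cong: "(\<And>k. k \<in> A \<Longrightarrow> w k = w' k) \<Longrightarrow> vm A w P = vm A w' P"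
  unfolding vm_def by (auto intro!: ext sum.cong)
lemma vm_cong2: "(\<And>k. k \<in> A \<Longrightarrow> P k = P' k) \<Longrightarrow> vm A w P = vm A w P'"
  unfolding vm_def by (auto intro!: ext sum.cong)
lemma dot_cong: "(\<And>k. k \<in> A \<Longrightarrow> w k = w' k) \<Longrightarrow> (\<And>k. k \<in> A \<Longrightarrow> r k = r' k) \<Longrightarrow> dot A w r = dot A w' r'"
  unfolding dot_def by (auto intro!: sum.cong)

lemma vm_add: "vm A (\<lambda>k. w k + w' k) P = (\<lambda>j. vm A w P j + vm A w' P j)"
  unfolding vm_def by (auto simp: distrib_right sum.distrib)
lemma vm_diff: "vm A (\<lambda>k. w k - w' k) P = (\<lambda>j. vm A w P j - vm A w' P j)"
  unfolding vm_def by (auto simp: left_diff_distrib sum_subtractf)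
lemma vm_sum: "vm A (\<lambda>k. \<Sum>m\<in>I. w m k) P = (\<lambda>j. \<Sum>m\<in>I. vm A (w m) P j)"
  unfolding vm_def by (auto simp: sum_distrib_right intro!: ext sum.swap)
lemma vm_sumR: "vm A w (\<lambda>k j. \<Sum>m\<in>I. P m k j) = (\<lambda>j. \<Sum>m\<in>I. vm A w (P m) j)"
  unfolding vm_def by (auto simp: sum_distrib_left intro!: ext sum.swap)
lemma vm_addR: "vm A w (\<lambda>k j. P k j + Q k j) = (\<lambda>j. vm A w P j + vm A w Q j)"
  unfolding vm_def by (auto simp: distrib_left sum.distrib)
lemma vm_diffR: "vm A w (\<lambda>k j. P k j - Q k j) = (\<lambda>j. vm A w P j - vm A w Q j)"
  unfolding vm_def by (auto simp: right_diff_distrib sum_subtractf)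
lemma dot_add: "dot A (\<lambda>k. w k + w' k) r = dot A w r + dot A w' r"
  unfolding dot_def by (auto simp: distrib_right sum.distrib)
lemma dot_diff: "dot A (\<lambda>k. w k - w' k) r = dot A w r - dot A w' r"
  unfolding dot_def by (auto simp: left_diff_distrib sum_subtractf)
lemma dot_sum: "dot A (\<lambda>k. \<Sum>m\<in>I. w m k) r = (\<Sum>m\<in>I. dot A (w m) r)"
  unfolding dot_def by (auto simp: sum_distrib_right intro!: sum.swap)
lemma dot_addR: "dot A w (\<lambda>k. r k + r' k) = dot A w r + dot A w r'"
  unfolding dot_def by (auto simp: distrib_left sum.distrib)
lemma dot_diffR: "dot A w (\<lambda>k. r k - r' k) = dot A w r - dot A w r'"
  unfolding dot_def by (auto simp: right_diff_distrib sum_subtractf)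

lemma vm_supp: "finite B \<Longrightarrow> A \<subseteq> B \<Longrightarrow> (\<And>k. k \<notin> A \<Longrightarrow> w k = 0) \<Longrightarrow> vm B w P = vm A w P"
  unfolding vm_def by (auto intro!: ext sum.mono_neutral_right)
lemma dot_supp: "finite B \<Longrightarrow> A \<subseteq> B \<Longrightarrow> (\<And>k. k \<notin> A \<Longrightarrow> w k = 0) \<Longrightarrow> dot B w r = dot A w r"
  unfolding dot_def by (auto intro!: sum.mono_neutral_right)

lemma vm_cancel: "is_inv_on A P Q \<Longrightarrow> finite A \<Longrightarrow> j \<in> A \<Longrightarrow> vm A (vm A w P) Q j = w j"
proof -
  assume h: "is_inv_on A P Q" "finite A" "j \<in> A"
  have "vm A (vm A w P) Q j = vm A w (\<lambda>k. vm A (P k) Q) j" by (simp only: vm_vm)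
  also have "\<dots> = (\<Sum>k\<in>A. w k * (if k = j then 1 else 0))"
    using h unfolding vm_def is_inv_on_def by (auto intro!: sum.cong)
  also have "\<dots> = w j" using h by (simp add: if_distrib cong: if_cong)
  finally show ?thesis .
qed

lemma is_inv_on_sym: "is_inv_on A P Q \<Longrightarrow> is_inv_on A Q P"
  unfolding is_inv_on_def by blast

lemma minv_inv: "invertible_on A P \<Longrightarrow> is_inv_on A P (minv A P)"
proof -
  assume "invertible_on A P"
  then have h: "is_inv_on A P (SOME Q. is_inv_on A P Q)" unfolding invertible_on_def by (rule someI_ex)
  show ?thesis using h unfolding is_inv_on_def minv_def Let_def
    by (auto cong: sum.cong)
qed

lemma minv_zero: "i \<notin> A \<or> j \<notin> A \<Longrightarrow> minv A P i j = 0"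
  unfolding minv_def Let_def by auto

lemma inv_unique: assumes "finite A" "is_inv_on A P Q" "is_inv_on A P Q'" "i \<in> A" "j \<in> A"
  shows "Q i j = Q' i j"
proof -
  have "Q i j = vm A (vm A (Q i) P) Q' j" using vm_cancel[OF assms(3) assms(1) assms(5)]
    by simp
  also have "\<dots> = vm A (\<lambda>k. if i = k then 1 else 0) Q' j"
    apply (rule arg_cong[where f="\<lambda>w. w j"], rule vm_cong)
    using assms unfolding is_inv_on_def vm_def by auto
  also have "\<dots> = (\<Sum>k\<in>A. if i = k then Q' i j else 0)" unfolding vm_def
    by (rule sum.cong) auto
  also have "\<dots> = Q' i j" using assms by simp
  finally show ?thesis .
qed

lemma minv_sym: assumes "finite A" "invertible_on A P" "\<And>i j. P i j = P j i"
  shows "minv A P i j = minv A P j i"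
proof (cases "i \<in> A \<and> j \<in> A")
  case True
  have h: "is_inv_on A P (minv A P)" using minv_inv assms by blast
  have "is_inv_on A P (\<lambda>a b. minv A P b a)" unfolding is_inv_on_def
  proof (intro ballI conjI)
    fix a b assume ab: "a \<in> A" "b \<in> A"
    have "(\<Sum>k\<in>A. P a k * minv A P b k) = (\<Sum>k\<in>A. minv A P b k * P k a)"
      by (simp add: assms(3)[of a] mult.commute)
    also have "\<dots> = (if b = a then 1 else 0)" using h ab unfolding is_inv_on_def by blast
    finally show "(\<Sum>k\<in>A. P a k * minv A P b k) = (if a = b then 1 else 0)" by auto
    have "(\<Sum>k\<in>A. minv A P k a * P k b) = (\<Sum>k\<in>A. P b k * minv A P k a)"
      by (simp add: assms(3)[of _ b] mult.commute)
    also have "\<dots> = (if b = a then 1 else 0)" using h ab unfolding is_inv_on_def by blast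
    finally show "(\<Sum>k\<in>A. minv A P k a * P k b) = (if a = b then 1 else 0)" by auto
  qed
  from inv_unique[OF assms(1) h this, of i j] True show ?thesis by simp
qed (auto simp: minv_zero)

lemma tri_eq: "finite A \<Longrightarrow> finite B \<Longrightarrow> tri A B P Q R u v = vm B (vm A (P u) Q) R v"
  unfolding tri_def vm_def by (simp add: sum_distrib_right sum.swap[of _ B])
lemma triv_eq: "triv A B P Q r u = dot B (vm A (P u) Q) r"
  unfolding triv_def vm_def dot_def by (simp add: sum_distrib_right sum.swap[of _ A])

lemma vm_supp2: "finite B \<Longrightarrow> A \<subseteq> B \<Longrightarrow> (\<And>k j. k \<notin> A \<Longrightarrow> P k j = 0) \<Longrightarrow> vm B w P = vm A w P"
  unfolding vm_def by (auto intro!: ext sum.mono_neutral_right)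
lemma dot_supp2: "finite B \<Longrightarrow> A \<subseteq> B \<Longrightarrow> (\<And>k. k \<notin> A \<Longrightarrow> r k = 0) \<Longrightarrow> dot B w r = dot A w r"
  unfolding dot_def by (auto intro!: sum.mono_neutral_right)
lemma vm_cong_pt: "(\<And>k. k \<in> A \<Longrightarrow> P k e = P' k e) \<Longrightarrow> vm A w P e = vm A w P' e"
  unfolding vm_def by (auto intro!: sum.cong)
lemma dot_swap: "dot A z (\<lambda>e. dot B g (\<lambda>t. Q t e)) = dot B g (\<lambda>t. dot A z (Q t))"
  unfolding dot_def by (auto simp: sum_distrib_left mult.assoc mult.left_commute intro!: sum.swap)
lemma dot_sumR: "dot A w (\<lambda>k. \<Sum>m\<in>I. r m k) = (\<Sum>m\<in>I. dot A w (r m))"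
  unfolding dot_def by (auto simp: sum_distrib_left intro!: sum.swap)
lemma vm_as_dot: "vm A x (\<lambda>d w. g w d) v = dot A x (g v)"
  unfolding vm_def dot_def ..



locale ctx =
  fixes \<sigma> :: "'x \<Rightarrow> 'x \<Rightarrow> real" and M :: nat and D U :: "nat \<Rightarrow> 'x set" and S DD :: "'x set"
  assumes sym: "\<And>x x'. \<sigma> x x' = \<sigma> x' x"
    and finD: "finite DD" and DD: "DD = (\<Union>m\<in>{1..M}. D m)"
    and Ddisj: "\<And>i j. i \<in> {1..M} \<Longrightarrow> j \<in> {1..M} \<Longrightarrow> i \<noteq> j \<Longrightarrow> D i \<inter> D j = {}"
    and Udisj: "\<And>i j. i \<in> {1..M} \<Longrightarrow> j \<in> {1..M} \<Longrightarrow> i \<noteq> j \<Longrightarrow> U i \<inter> U j = {}"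
    and finS: "finite S"
    and invS: "invertible_on S \<sigma>"
    and invDm: "\<And>m. m \<in> {1..M} \<Longrightarrow> invertible_on (D m) (condcov \<sigma> S)"
    and invSdd: "invertible_on S (Sddot \<sigma> S M D)"
    and invPIC: "invertible_on DD (PICK \<sigma> S M D)"
begin

abbreviation "Ki \<equiv> minv S \<sigma>"
abbreviation "C \<equiv> condcov \<sigma> S"
abbreviation "L m \<equiv> minv (D m) C"
abbreviation "Sd m \<equiv> Sdot \<sigma> S (D m)"
abbreviation "Sdd \<equiv> Sddot \<sigma> S M D"
abbreviation "Si \<equiv> minv S Sdd"
abbreviation "P \<equiv> PICK \<sigma> S M D"
abbreviation "X \<equiv> minv DD P"
abbreviation "Ph m \<equiv> Phi \<sigma> S (D m)"
abbreviation "G u \<equiv> vm S (\<sigma> u) Ki"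
abbreviation "Gm \<equiv> Gam \<sigma> S"
definition "Lin = (\<lambda>d e. \<Sum>m\<in>{1..M}. L m d e)"
definition "aa i u = vm S (Ph i u) Si"
definition "ww i u = (\<lambda>d. vm (D i) (C u) (L i) d + vm DD (vm S (aa i u) \<sigma>) Lin d)"
definition "hh i u = (\<lambda>s. Sd i u s - vm S (G u) (Sd i) s)"

lemma DmD: "m \<in> {1..M} \<Longrightarrow> D m \<subseteq> DD" using DD by auto
lemma finDm: "m \<in> {1..M} \<Longrightarrow> finite (D m)" using DmD finD finite_subset by blast

lemma KiInv: "is_inv_on S \<sigma> Ki" by (rule minv_inv[OF invS])
lemma SiInv: "is_inv_on S Sdd Si" by (rule minv_inv[OF invSdd])
lemma XInv: "is_inv_on DD P X" by (rule minv_inv[OF invPIC])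
lemma LInv: "m \<in> {1..M} \<Longrightarrow> is_inv_on (D m) C (L m)" by (rule minv_inv[OF invDm])

lemma Ki_sym: "Ki a b = Ki b a" by (rule minv_sym[OF finS invS sym])

lemma Gm_vm: "Gm a b = vm S (G a) \<sigma> b"
  unfolding Gam_def by (simp add: tri_eq finS)
lemma Gm_fun: "Gm a = vm S (G a) \<sigma>" using Gm_vm by auto

lemma Gm_sym: "Gm a b = Gm b a"
  unfolding Gam_def tri_def
  by (subst sum.swap) (auto intro!: sum.cong simp: sym[of a] sym[of _ b] Ki_sym mult.commute mult.left_commute)

lemma C_sym: "C a b = C b a" unfolding condcov_def using Gm_sym sym by metis

lemma L_sym: "m \<in> {1..M} \<Longrightarrow> L m a b = L m b a"
  by (rule minv_sym[OF finDm invDm C_sym])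

lemma Sd_vm: "m \<in> {1..M} \<Longrightarrow> Sd m a b = vm (D m) (vm (D m) (\<sigma> a) (L m)) \<sigma> b"
  unfolding Sdot_def by (simp add: tri_eq finDm)

lemma Sd_sym: "m \<in> {1..M} \<Longrightarrow> Sd m a b = Sd m b a"
  unfolding Sdot_def tri_def
  by (subst sum.swap) (auto intro!: sum.cong simp: sym[of a] sym[of _ b] L_sym mult.commute mult.left_commute)

lemma Sdd_sym: "Sdd a b = Sdd b a"
  unfolding Sddot_def by (auto simp: sym[of a] Sd_sym intro!: sum.cong)

lemma Ph_eq: "Ph m a s = \<sigma> a s + vm S (G a) (Sd m) s - Sd m a s"
  unfolding Phi_def by (simp add: tri_eq finS)


lemma Lin_vm: "vm DD x Lin = (\<lambda>e. \<Sum>m\<in>{1..M}. vm (D m) x (L m) e)"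
proof -
  have "vm DD x Lin = (\<lambda>e. \<Sum>m\<in>{1..M}. vm DD x (L m) e)"
    unfolding Lin_def by (rule vm_sumR)
  also have "\<dots> = (\<lambda>e. \<Sum>m\<in>{1..M}. vm (D m) x (L m) e)"
    by (intro ext sum.cong refl, subst vm_supp2[OF finD DmD]) (auto simp: minv_zero)
  finally show ?thesis .
qed

lemma Lm_supp: "k \<notin> D m \<Longrightarrow> vm A x (L m) k = 0"
  unfolding vm_def by (simp add: minv_zero)

lemma blockL: assumes m: "m \<in> {1..M}" and e: "e \<in> DD"
  shows "vm DD (vm (D m) x (L m)) (Lam \<sigma> S M D) e = (if e \<in> D m then x e else 0)"
proof -
  have "vm DD (vm (D m) x (L m)) (Lam \<sigma> S M D) e = vm (D m) (vm (D m) x (L m)) (Lam \<sigma> S M D) e"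
    by (subst vm_supp[OF finD DmD[OF m]]) (auto simp: Lm_supp)
  also have "\<dots> = (if e \<in> D m then x e else 0)"
  proof (cases "e \<in> D m")
    case True
    have "vm (D m) (vm (D m) x (L m)) (Lam \<sigma> S M D) e = vm (D m) (vm (D m) x (L m)) C e"
      by (rule vm_cong_pt) (use m True in \<open>auto simp: Lam_def\<close>)
    also have "\<dots> = x e" by (rule vm_cancel[OF is_inv_on_sym[OF LInv[OF m]] finDm[OF m] True])
    finally show ?thesis using True by simp
  next
    case False
    have "vm (D m) (vm (D m) x (L m)) (Lam \<sigma> S M D) e = vm (D m) (vm (D m) x (L m)) (\<lambda>_ _. 0) e"
    proof (rule vm_cong_pt)
      fix k assume k: "k \<in> D m"
      show "Lam \<sigma> S M D k e = 0"
      proof (rule ccontr)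
        assume "Lam \<sigma> S M D k e \<noteq> 0"
        then obtain m' where m': "m' \<in> {1..M}" "k \<in> D m'" "e \<in> D m'" unfolding Lam_def by (auto split: if_splits)
        then have "m' \<noteq> m" using False by auto
        then show False using Ddisj[OF m' (1) m] k m' by auto
      qed
    qed
    also have "\<dots> = 0" unfolding vm_def by simp
    finally show ?thesis using False by simp
  qed
  finally show ?thesis .
qed

lemma uniq_block: assumes "e \<in> DD" obtains m0 where "m0 \<in> {1..M}" "e \<in> D m0"
  "\<And>m. m \<in> {1..M} \<Longrightarrow> e \<in> D m \<longleftrightarrow> m = m0"
proof -
  from assms DD obtain m0 where m0: "m0 \<in> {1..M}" "e \<in> D m0" by auto
  then have "\<And>m. m \<in> {1..M} \<Longrightarrow> e \<in> D m \<longleftrightarrow> m = m0" using Ddisj by blast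
  with m0 that show ?thesis by blast
qed

lemma sum_block: assumes "e \<in> DD" "m0 \<in> {1..M}" "e \<in> D m0"
  shows "(\<Sum>m\<in>{1..M}. if e \<in> D m then f m else 0) = f m0"
proof -
  have "(\<Sum>m\<in>{1..M}. if e \<in> D m then f m else 0) = (\<Sum>m\<in>{1..M}. if m = m0 then f m else 0)"
  proof (intro sum.cong refl)
    fix m assume m: "m \<in> {1..M}"
    have "e \<in> D m \<longleftrightarrow> m = m0" using Ddisj[OF m assms(2)] assms by blast
    then show "(if e \<in> D m then f m else 0) = (if m = m0 then f m else 0)" by simp
  qed
  also have "\<dots> = f m0" using assms by simp
  finally show ?thesis .
qed

lemma blockLin: assumes e: "e \<in> DD" shows "vm DD (vm DD x Lin) (Lam \<sigma> S M D) e = x e"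
proof -
  from e DD obtain m0 where m0: "m0 \<in> {1..M}" "e \<in> D m0" by auto
  have "vm DD (vm DD x Lin) (Lam \<sigma> S M D) e = (\<Sum>m\<in>{1..M}. vm DD (vm (D m) x (L m)) (Lam \<sigma> S M D) e)"
    by (simp add: Lin_vm vm_sum)
  also have "\<dots> = (\<Sum>m\<in>{1..M}. if e \<in> D m then x e else 0)"
    using blockL e by (intro sum.cong) auto
  also have "\<dots> = x e" by (rule sum_block[OF e m0])
  finally show ?thesis .
qed


lemma Sd_fun: "m \<in> {1..M} \<Longrightarrow> Sd m = (\<lambda>k. vm (D m) (vm (D m) (\<sigma> k) (L m)) \<sigma>)"
  using Sd_vm by (intro ext) auto

lemma C_fun: "C u = (\<lambda>j. \<sigma> u j - Gm u j)" unfolding condcov_def by simp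

lemma vmG: "m \<in> {1..M} \<Longrightarrow> vm (D m) (vm (D m) (vm S g \<sigma>) (L m)) \<sigma> = vm S g (Sd m)"
  by (simp only: vm_vm[where A=S] Sd_fun)

lemma zetaSig: assumes i: "i \<in> {1..M}" shows "vm DD (vm (D i) (C u) (L i)) \<sigma> = hh i u"
proof -
  have "vm DD (vm (D i) (C u) (L i)) \<sigma> = vm (D i) (vm (D i) (C u) (L i)) \<sigma>"
    by (rule vm_supp[OF finD DmD[OF i]]) (simp add: Lm_supp)
  also have "\<dots> = vm (D i) (\<lambda>j. vm (D i) (\<sigma> u) (L i) j - vm (D i) (Gm u) (L i) j) \<sigma>"
    by (simp only: C_fun vm_diff)
  also have "\<dots> = (\<lambda>j. vm (D i) (vm (D i) (\<sigma> u) (L i)) \<sigma> j - vm (D i) (vm (D i) (vm S (G u) \<sigma>) (L i)) \<sigma> j)"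
    by (simp only: vm_diff Gm_fun)
  also have "\<dots> = hh i u" unfolding hh_def vmG[OF i] by (simp add: Sd_vm[OF i])
  finally show ?thesis .
qed

lemma LinSig: "vm DD (vm DD (vm S g \<sigma>) Lin) \<sigma> = (\<lambda>s. vm S g Sdd s - vm S g \<sigma> s)"
proof -
  have "vm DD (vm DD (vm S g \<sigma>) Lin) \<sigma> = (\<lambda>j. \<Sum>m\<in>{1..M}. vm DD (vm (D m) (vm S g \<sigma>) (L m)) \<sigma> j)"
    by (simp only: Lin_vm vm_sum)
  also have "\<dots> = (\<lambda>j. \<Sum>m\<in>{1..M}. vm S g (Sd m) j)"
  proof (intro ext sum.cong refl)
    fix j m assume m: "m \<in> {1..M}"
    have "vm DD (vm (D m) (vm S g \<sigma>) (L m)) \<sigma> = vm (D m) (vm (D m) (vm S g \<sigma>) (L m)) \<sigma>"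
      by (rule vm_supp[OF finD DmD[OF m]]) (simp add: Lm_supp)
    then show "vm DD (vm (D m) (vm S g \<sigma>) (L m)) \<sigma> j = vm S g (Sd m) j" using vmG[OF m] by simp
  qed
  also have "\<dots> = vm S g (\<lambda>k j. \<Sum>m\<in>{1..M}. Sd m k j)" by (simp only: vm_sumR)
  also have "\<dots> = (\<lambda>s. vm S g Sdd s - vm S g \<sigma> s)"
    unfolding Sddot_def vm_addR by simp
  finally show ?thesis .
qed

lemma wLam: assumes i: "i \<in> {1..M}" and e: "e \<in> DD"
  shows "vm DD (ww i u) (Lam \<sigma> S M D) e = (if e \<in> D i then C u e else 0) + vm S (aa i u) \<sigma> e"
  unfolding ww_def vm_add using blockL[OF i e] blockLin[OF e] by simp

lemma wSig: assumes i: "i \<in> {1..M}"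
  shows "vm DD (ww i u) \<sigma> = (\<lambda>s. hh i u s + vm S (aa i u) Sdd s - vm S (aa i u) \<sigma> s)"
  unfolding ww_def vm_add zetaSig[OF i] LinSig by (simp add: algebra_simps)


lemma Gm_fun2: "Gm = (\<lambda>d. vm S (vm S (\<sigma> d) Ki) \<sigma>)" using Gm_fun by (intro ext) simp

lemma wSigS: assumes i: "i \<in> {1..M}" and s: "s \<in> S"
  shows "vm DD (ww i u) \<sigma> s = \<sigma> u s - vm S (aa i u) \<sigma> s"
proof -
  have "vm S (aa i u) Sdd s = Ph i u s"
    unfolding aa_def by (rule vm_cancel[OF is_inv_on_sym[OF SiInv] finS s])
  then show ?thesis unfolding wSig[OF i] hh_def Ph_eq by simp
qed

lemma wGam2: assumes i: "i \<in> {1..M}"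
  shows "vm DD (ww i u) Gm e = Gm u e - vm S (aa i u) \<sigma> e"
proof -
  have "vm DD (ww i u) Gm = vm S (vm S (vm DD (ww i u) \<sigma>) Ki) \<sigma>"
    unfolding Gm_fun2 by (simp only: vm_vm)
  also have "\<dots> = vm S (vm S (\<lambda>s. \<sigma> u s - vm S (aa i u) \<sigma> s) Ki) \<sigma>"
  proof -
    have "vm S (vm DD (ww i u) \<sigma>) Ki = vm S (\<lambda>s. \<sigma> u s - vm S (aa i u) \<sigma> s) Ki"
      by (rule vm_cong) (rule wSigS[OF i])
    then show ?thesis by simp
  qed
  also have "\<dots> = (\<lambda>j. vm S (G u) \<sigma> j - vm S (vm S (vm S (aa i u) \<sigma>) Ki) \<sigma> j)"
    by (simp only: vm_diff)
  also have "vm S (vm S (vm S (aa i u) \<sigma>) Ki) \<sigma> = vm S (aa i u) \<sigma>"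
    by (rule vm_cong) (rule vm_cancel[OF KiInv finS])
  finally have h: "vm DD (ww i u) Gm = (\<lambda>j. vm S (G u) \<sigma> j - vm S (aa i u) \<sigma> j)" .
  show ?thesis using fun_cong[OF h, of e] Gm_vm[of u e] by simp
qed

lemma GamT_row: assumes i: "i \<in> {1..M}" and u: "u \<in> U i" and e: "e \<in> DD"
  shows "GamT \<sigma> S M D U u e = Gm u e + (if e \<in> D i then C u e else 0)"
proof -
  have "(\<exists>m\<in>{1..M}. u \<in> U m \<and> e \<in> D m) \<longleftrightarrow> e \<in> D i"
    using Udisj[OF _ i] i u by blast
  then show ?thesis unfolding GamT_def by (simp add: condcov_def)
qed

lemma wP: assumes i: "i \<in> {1..M}" and u: "u \<in> U i" and e: "e \<in> DD"
  shows "vm DD (ww i u) P e = GamT \<sigma> S M D U u e"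
proof -
  have "vm DD (ww i u) P e = vm DD (ww i u) Gm e + vm DD (ww i u) (Lam \<sigma> S M D) e"
    unfolding PICK_def vm_addR by simp
  then show ?thesis using wGam2[OF i] wLam[OF i e] GamT_row[OF i u e] by simp
qed

lemma wX: assumes i: "i \<in> {1..M}" and u: "u \<in> U i" and d: "d \<in> DD"
  shows "vm DD (GamT \<sigma> S M D U u) X d = ww i u d"
proof -
  have "vm DD (GamT \<sigma> S M D U u) X = vm DD (vm DD (ww i u) P) X"
    by (rule vm_cong) (simp add: wP[OF i u])
  then show ?thesis using vm_cancel[OF XInv finD d] by simp
qed


lemma ydot_fun: "ydot \<mu> \<sigma> y S Dm = (\<lambda>k. dot Dm (vm Dm (\<sigma> k) (minv Dm C)) (\<lambda>l. y l - \<mu> l))"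
  unfolding ydot_def triv_eq by (rule ext) simp

lemma dotG: "dot (D m) (vm (D m) (vm S g \<sigma>) (L m)) r = dot S g (\<lambda>k. dot (D m) (vm (D m) (\<sigma> k) (L m)) r)"
  by (simp only: vm_vm dot_vm)

lemma mean: assumes i: "i \<in> {1..M}" and u: "u \<in> U i"
  shows "mu_pPIC \<mu> \<sigma> y S M D i u = mu_PIC \<mu> \<sigma> y S M D U u"
proof -
  define r where "r = (\<lambda>l. y l - \<mu> l)"
  have "mu_PIC \<mu> \<sigma> y S M D U u = \<mu> u + dot DD (vm DD (GamT \<sigma> S M D U u) X) r"
    unfolding mu_PIC_def DD[symmetric] triv_eq r_def ..
  also have "dot DD (vm DD (GamT \<sigma> S M D U u) X) r = dot DD (ww i u) r"
    by (rule dot_cong) (auto simp: wX[OF i u])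
  also have "\<dots> = dot DD (vm (D i) (C u) (L i)) r + dot DD (vm DD (vm S (aa i u) \<sigma>) Lin) r"
    unfolding ww_def dot_add ..
  also have "dot DD (vm (D i) (C u) (L i)) r = dot (D i) (vm (D i) (C u) (L i)) r"
    by (rule dot_supp[OF finD DmD[OF i]]) (simp add: Lm_supp)
  also have "\<dots> = dot (D i) (vm (D i) (\<sigma> u) (L i)) r - dot (D i) (vm (D i) (vm S (G u) \<sigma>) (L i)) r"
    by (simp only: C_fun vm_diff dot_diff Gm_fun)
  also have "\<dots> = ydot \<mu> \<sigma> y S (D i) u - dot S (G u) (ydot \<mu> \<sigma> y S (D i))"
    unfolding dotG ydot_fun r_def ..
  also have "dot DD (vm DD (vm S (aa i u) \<sigma>) Lin) r = (\<Sum>m\<in>{1..M}. dot DD (vm (D m) (vm S (aa i u) \<sigma>) (L m)) r)"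
    by (simp only: Lin_vm dot_sum)
  also have "\<dots> = (\<Sum>m\<in>{1..M}. dot S (aa i u) (ydot \<mu> \<sigma> y S (D m)))"
  proof (rule sum.cong[OF refl])
    fix m assume m: "m \<in> {1..M}"
    have "dot DD (vm (D m) (vm S (aa i u) \<sigma>) (L m)) r = dot (D m) (vm (D m) (vm S (aa i u) \<sigma>) (L m)) r"
      by (rule dot_supp[OF finD DmD[OF m]]) (simp add: Lm_supp)
    then show "dot DD (vm (D m) (vm S (aa i u) \<sigma>) (L m)) r = dot S (aa i u) (ydot \<mu> \<sigma> y S (D m))"
      unfolding dotG ydot_fun r_def by simp
  qed
  also have "\<dots> = dot S (aa i u) (yddot \<mu> \<sigma> y S M D)"
    unfolding yddot_def dot_sumR ..
  finally show ?thesis unfolding mu_pPIC_def triv_eq aa_def by simp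
qed


lemma KiSwap: "vm S (vm S x Ki) \<sigma> v = dot S x (G v)"
proof -
  have "vm S (vm S x Ki) \<sigma> v = vm S x (\<lambda>k. vm S (Ki k) \<sigma>) v" by (simp only: vm_vm)
  also have "\<dots> = dot S x (G v)"
  proof -
    have "\<And>k. vm S (Ki k) \<sigma> v = G v k"
    proof -
      fix k
      show "vm S (Ki k) \<sigma> v = G v k" unfolding vm_def
        by (rule sum.cong[OF refl]) (metis Ki_sym sym mult.commute)
    qed
    then show ?thesis unfolding dot_def vm_def by simp
  qed
  finally show ?thesis .
qed

lemma dot_sig: "dot A z (\<sigma> v) = vm A z \<sigma> v"
  unfolding dot_def vm_def by (simp add: sym[of v])

lemma Gm_dot: "Gm v = (\<lambda>e. dot S (G v) (\<lambda>t. \<sigma> t e))"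
  unfolding Gm_fun vm_def dot_def ..

lemma hvS: assumes j: "j \<in> {1..M}"
  shows "dot (D j) (vm (D j) (\<sigma> s) (L j)) (C v) = \<sigma> v s - Ph j v s"
proof -
  have "dot (D j) (vm (D j) (\<sigma> s) (L j)) (C v) = dot (D j) (vm (D j) (\<sigma> s) (L j)) (\<sigma> v)
       - dot (D j) (vm (D j) (\<sigma> s) (L j)) (Gm v)"
    by (simp only: C_fun dot_diffR)
  also have "dot (D j) (vm (D j) (\<sigma> s) (L j)) (\<sigma> v) = Sd j v s"
    unfolding dot_sig Sd_vm[OF j, symmetric] by (rule Sd_sym[OF j])
  also have "dot (D j) (vm (D j) (\<sigma> s) (L j)) (Gm v) = dot S (G v) (\<lambda>t. dot (D j) (vm (D j) (\<sigma> s) (L j)) (\<sigma> t))"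
    by (subst Gm_dot) (rule dot_swap)
  also have "\<dots> = dot S (G v) (\<lambda>t. Sd j t s)"
    unfolding dot_sig Sd_vm[OF j, symmetric] using Sd_sym[OF j] by simp
  also have "\<dots> = vm S (G v) (Sd j) s" unfolding dot_def vm_def ..
  finally show ?thesis unfolding Ph_eq by simp
qed

lemma zetaSigD: assumes i: "i \<in> {1..M}" shows "vm (D i) (vm (D i) (C u) (L i)) \<sigma> = hh i u"
  using zetaSig[OF i] vm_supp[OF finD DmD[OF i], of "vm (D i) (C u) (L i)" \<sigma>] by (simp add: Lm_supp)

lemma cov: assumes i: "i \<in> {1..M}" and u: "u \<in> U i" and j: "j \<in> {1..M}" and v: "v \<in> U j"
  shows "Sigma_pPIC \<sigma> S M D i j u v = Sigma_PIC \<sigma> S M D U u v"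
proof -
  define Z where "Z = dot (D j) (vm (D i) (C u) (L i)) (C v)"
  define x where "x = vm S (aa i u) \<sigma>"
  have "Sigma_PIC \<sigma> S M D U u v = \<sigma> u v - dot DD (vm DD (GamT \<sigma> S M D U u) X) (GamT \<sigma> S M D U v)"
    unfolding Sigma_PIC_def DD[symmetric] tri_eq[OF finD finD] vm_as_dot ..
  also have "dot DD (vm DD (GamT \<sigma> S M D U u) X) (GamT \<sigma> S M D U v)
      = dot DD (ww i u) (\<lambda>d. Gm v d + (if d \<in> D j then C v d else 0))"
    by (rule dot_cong) (auto simp: wX[OF i u] GamT_row[OF j v])
  also have "\<dots> = dot DD (ww i u) (Gm v) + dot DD (ww i u) (\<lambda>d. if d \<in> D j then C v d else 0)"
    by (rule dot_addR)
  also have "dot DD (ww i u) (Gm v) = Gm u v - vm S (aa i u) \<sigma> v"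
  proof -
    have "dot DD (ww i u) (Gm v) = vm DD (ww i u) Gm v"
      unfolding dot_def vm_def using Gm_sym by simp
    then show ?thesis using wGam2[OF i] by simp
  qed
  also have "dot DD (ww i u) (\<lambda>d. if d \<in> D j then C v d else 0) = dot (D j) (ww i u) (C v)"
    by (subst dot_supp2[OF finD DmD[OF j]]) (auto intro!: dot_cong)
  also have "\<dots> = Z + dot (D j) (vm DD x Lin) (C v)"
    unfolding ww_def dot_add Z_def x_def ..
  also have "dot (D j) (vm DD x Lin) (C v) = (\<Sum>m\<in>{1..M}. dot (D j) (vm (D m) x (L m)) (C v))"
    by (simp only: Lin_vm dot_sum)
  also have "\<dots> = (\<Sum>m\<in>{1..M}. if m = j then dot (D j) (vm (D j) x (L j)) (C v) else 0)"
  proof (rule sum.cong[OF refl])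
    fix m assume m: "m \<in> {1..M}"
    show "dot (D j) (vm (D m) x (L m)) (C v) = (if m = j then dot (D j) (vm (D j) x (L j)) (C v) else 0)"
    proof (cases "m = j")
      case False
      then have "\<And>k. k \<in> D j \<Longrightarrow> k \<notin> D m" using Ddisj[OF m j] by blast
      then show ?thesis using False unfolding dot_def by (simp add: Lm_supp)
    qed simp
  qed
  also have "\<dots> = dot (D j) (vm (D j) x (L j)) (C v)" using j by simp
  also have "\<dots> = dot S (aa i u) (\<lambda>s. \<sigma> v s - Ph j v s)"
    unfolding x_def dotG by (rule dot_cong) (auto simp: hvS[OF j])
  also have "\<dots> = vm S (aa i u) \<sigma> v - dot S (aa i u) (Ph j v)"
    by (simp only: dot_diffR dot_sig)
  finally have PIC: "Sigma_PIC \<sigma> S M D U u v = \<sigma> u v - (Gm u v + Z - dot S (aa i u) (Ph j v))"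
    by simp
  have T3: "tri S S (Ph i) Si (\<lambda>s w. Ph j w s) u v = dot S (aa i u) (Ph j v)"
    unfolding tri_eq[OF finS finS] aa_def vm_as_dot ..
  show ?thesis
  proof (cases "i = j")
    case False
    have "\<forall>k\<in>D j. vm (D i) (C u) (L i) k = 0" using Ddisj[OF i j False] by (auto intro: Lm_supp)
    then have "Z = 0" unfolding Z_def dot_def by simp
    then show ?thesis using False PIC T3 unfolding Sigma_pPIC_def condcov_def by simp
  next
    case True
    have "Z = dot (D i) (vm (D i) (C u) (L i)) (\<sigma> v) - dot (D i) (vm (D i) (C u) (L i)) (Gm v)"
      unfolding Z_def True by (simp only: C_fun dot_diffR)
    also have "\<dots> = hh i u v - dot S (G v) (hh i u)"
      unfolding Gm_dot dot_swap dot_sig zetaSigD[OF i] ..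
    finally have Zeq: "Z = hh i u v - dot S (G v) (hh i u)" .
    have "tri S S (Ph i) Ki \<sigma> u v = dot S (Ph i u) (G v)"
      unfolding tri_eq[OF finS finS] KiSwap ..
    also have "\<dots> = dot S (\<lambda>s. \<sigma> u s - hh i u s) (G v)"
      by (rule dot_cong) (auto simp: Ph_eq hh_def)
    also have "\<dots> = Gm u v - dot S (G v) (hh i u)"
      by (simp only: dot_diff Gm_vm KiSwap dot_comm[of S "hh i u"])
    finally have T1: "tri S S (Ph i) Ki \<sigma> u v = Gm u v - dot S (G v) (hh i u)" .
    have T2: "tri S S \<sigma> Ki (Sd i) u v = vm S (G u) (Sd i) v"
      unfolding tri_eq[OF finS finS] ..
    show ?thesis using True PIC T3[unfolded True] T1 T2 Zeq unfolding Sigma_pPIC_def hh_def by simp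
  qed
qed

end

theorem theorem2:
  fixes \<mu> :: "'x \<Rightarrow> real" and \<sigma> :: "'x \<Rightarrow> 'x \<Rightarrow> real" and y :: "'x \<Rightarrow> real"
    and M :: nat and D U :: "nat \<Rightarrow> 'x set" and S DD UU :: "'x set"
  assumes sym: "\<And>x x'. \<sigma> x x' = \<sigma> x' x"
    and psd: "\<And>F c. finite F \<Longrightarrow> (\<Sum>x\<in>F. \<Sum>x'\<in>F. c x * \<sigma> x x' * c x') \<ge> 0"
    and M: "M \<ge> 1"
    and finD: "finite DD" and DD: "DD = (\<Union>m\<in>{1..M}. D m)"
    and Ddisj: "\<And>i j. i \<in> {1..M} \<Longrightarrow> j \<in> {1..M} \<Longrightarrow> i \<noteq> j \<Longrightarrow> D i \<inter> D j = {}"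
    and Dcard: "\<And>m. m \<in> {1..M} \<Longrightarrow> card (D m) * M = card DD"
    and finU: "finite UU" and UU: "UU = (\<Union>m\<in>{1..M}. U m)"
    and UD: "UU \<inter> DD = {}"
    and Udisj: "\<And>i j. i \<in> {1..M} \<Longrightarrow> j \<in> {1..M} \<Longrightarrow> i \<noteq> j \<Longrightarrow> U i \<inter> U j = {}"
    and Ucard: "\<And>m. m \<in> {1..M} \<Longrightarrow> card (U m) * M = card UU"
    and finS: "finite S"
    and invS: "invertible_on S \<sigma>"
    and invDm: "\<And>m. m \<in> {1..M} \<Longrightarrow> invertible_on (D m) (condcov \<sigma> S)"
    and invSdd: "invertible_on S (Sddot \<sigma> S M D)"
    and invPIC: "invertible_on DD (PICK \<sigma> S M D)"
  shows "(\<forall>m\<in>{1..M}. \<forall>u\<in>U m. mu_pPIC \<mu> \<sigma> y S M D m u = mu_PIC \<mu> \<sigma> y S M D U u)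
       \<and> (\<forall>i\<in>{1..M}. \<forall>j\<in>{1..M}. \<forall>u\<in>U i. \<forall>v\<in>U j.
            Sigma_pPIC \<sigma> S M D i j u v = Sigma_PIC \<sigma> S M D U u v)"
  proof -
  interpret ctx \<sigma> M D U S DD
    by (unfold_locales) (fact sym finD DD Ddisj Udisj finS invS invDm invSdd invPIC)+
  show ?thesis using mean cov by blast
qed

end
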